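(* For every integer $i\ge 1$, $\lim_{k\to\infty}\overline{\alpha}(\{1,2i,k\})=\frac{i}{2i+1}$.
   Context: For a finite set $S$ of positive integers, the distance graph $G(S)$ has vertex set $\mathbb{Z}$, with $i,j$ adjacent iff $|i-j|\in S$. The density of $A\subseteq\mathbb{Z}$ is $\delta(A)=\limsup_{N\to\infty}\frac{|A\cap[-N,N]|}{2N+1}$, and the independence ratio $\overline{\alpha}(S)$ is the supremum of $\delta(A)$ over independent sets $A$ of $G(S)$. *)

theory Defs
  imports "HOL-Analysis.Analysis"
begin

definition dist_adj :: "nat set \<Rightarrow> int \<Rightarrow> int \<Rightarrow> bool" where
  "dist_adj S i j \<longleftrightarrow> nat \<bar>i - j\<bar> \<in> S \<and> i \<noteq> j"

definition indep_set :: "nat set \<Rightarrow> int set \<Rightarrow> bool" where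
  "indep_set S A \<longleftrightarrow> (\<forall>i\<in>A. \<forall>j\<in>A. \<not> dist_adj S i j)"

definition density :: "int set \<Rightarrow> ereal" where
  "density A = limsup (\<lambda>N::nat. ereal (real (card (A \<inter> {- int N .. int N})) / real (2 * N + 1)))"

definition indep_ratio :: "nat set \<Rightarrow> ereal" where
  "indep_ratio S = (SUP A \<in> {A. indep_set S A}. density A)"

end

theory Submission
  imports Defs "HOL-Real_Asymp.Real_Asymp"
begin


lemma pair_le1:
  assumes "indep_set S A" "1 \<in> S"
  shows "card (A \<inter> {u, u+1}) \<le> 1"
proof -
  have "\<not> (u \<in> A \<and> u+1 \<in> A)"
    using assms unfolding indep_set_def dist_adj_def by force
  hence "A \<inter> {u, u+1} \<subseteq> {u} \<or> A \<inter> {u, u+1} \<subseteq> {u+1}" by auto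
  thus ?thesis
  proof
    assume "A \<inter> {u, u+1} \<subseteq> {u}"
    from card_mono[OF _ this] show ?thesis by simp
  next
    assume "A \<inter> {u, u+1} \<subseteq> {u+1}"
    from card_mono[OF _ this] show ?thesis by simp
  qed
qed

lemma half_split:
  fixes t :: int
  assumes "0 \<le> t" "t < 2 * int i"
  shows "\<exists>j<i. t = 2 * int j \<or> t = 2 * int j + 1"
proof -
  have e: "t = 2 * (t div 2) + t mod 2" by simp
  have m: "t mod 2 = 0 \<or> t mod 2 = 1" by auto
  have d0: "t div 2 \<ge> 0" using assms(1) by simp
  define j where "j = nat (t div 2)"
  have ej: "int j = t div 2" unfolding j_def using d0 by simp
  have "j < i" using e m ej assms(2) by linarith
  moreover have "t = 2 * int j \<or> t = 2 * int j + 1" using e m ej by linarith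
  ultimately show ?thesis by blast
qed

lemma adj_not:
  assumes "indep_set S A" "d \<in> S" "d > 0" "x \<in> A"
  shows "x + int d \<notin> A"
proof
  assume "x + int d \<in> A"
  moreover have "dist_adj S x (x + int d)" unfolding dist_adj_def using assms(2,3) by simp
  ultimately show False using assms(1,4) unfolding indep_set_def by blast
qed

lemma window:
  assumes "indep_set S A" "1 \<in> S" "2*i \<in> S" "i \<ge> 1"
  shows "card (A \<inter> {x .. x + 2 * int i}) \<le> i"
proof (cases "x \<in> A")
  case True
  have "x + 2*int i \<notin> A"
    using adj_not[OF assms(1,3) _ True] assms(4) by simp
  hence sub: "A \<inter> {x .. x + 2 * int i} \<subseteq> (\<Union>j<i. A \<inter> {x + 2*int j, x + 2*int j + 1})"
  proof (intro subsetI)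
    fix y assume y: "y \<in> A \<inter> {x .. x + 2 * int i}"
    with \<open>x + 2*int i \<notin> A\<close> have "y \<noteq> x + 2*int i" by auto
    with y have "0 \<le> y - x" "y - x < 2 * int i" by auto
    from half_split[OF this] obtain j where "j < i" "y - x = 2*int j \<or> y - x = 2*int j + 1" by blast
    hence "j < i" "y = x + 2*int j \<or> y = x + 2*int j + 1" by auto
    thus "y \<in> (\<Union>j<i. A \<inter> {x + 2*int j, x + 2*int j + 1})" using y by blast
  qed
  have "card (A \<inter> {x .. x + 2 * int i}) \<le> card (\<Union>j<i. A \<inter> {x + 2*int j, x + 2*int j + 1})"
    by (rule card_mono[OF _ sub]) auto
  also have "\<dots> \<le> (\<Sum>j<i. card (A \<inter> {x + 2*int j, x + 2*int j + 1}))" by (rule card_UN_le) auto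
  also have "\<dots> \<le> (\<Sum>j<i. 1)" by (rule sum_mono) (rule pair_le1[OF assms(1,2)])
  finally show ?thesis by simp
next
  case False
  hence sub: "A \<inter> {x .. x + 2 * int i} \<subseteq> (\<Union>j<i. A \<inter> {x + 2*int j + 1, x + 2*int j + 1 + 1})"
  proof (intro subsetI)
    fix y assume y: "y \<in> A \<inter> {x .. x + 2 * int i}"
    with False have "y \<noteq> x" by auto
    with y have "0 \<le> y - x - 1" "y - x - 1 < 2 * int i" by auto
    from half_split[OF this] obtain j where "j < i" "y - x - 1 = 2*int j \<or> y - x - 1 = 2*int j + 1" by blast
    hence "j < i" "y = x + 2*int j + 1 \<or> y = x + 2*int j + 1 + 1" by auto
    thus "y \<in> (\<Union>j<i. A \<inter> {x + 2*int j + 1, x + 2*int j + 1 + 1})" using y by blast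
  qed
  have "card (A \<inter> {x .. x + 2 * int i}) \<le> card (\<Union>j<i. A \<inter> {x + 2*int j + 1, x + 2*int j + 1 + 1})"
    by (rule card_mono[OF _ sub]) auto
  also have "\<dots> \<le> (\<Sum>j<i. card (A \<inter> {x + 2*int j + 1, x + 2*int j + 1 + 1}))" by (rule card_UN_le) auto
  also have "\<dots> \<le> (\<Sum>j<i. 1)" by (rule sum_mono) (rule pair_le1[OF assms(1,2)])
  finally show ?thesis by simp
qed

lemma count_upper:
  assumes "indep_set S A" "1 \<in> S" "2*i \<in> S" "i \<ge> 1"
  shows "card (A \<inter> {a ..< a + int n * (2 * int i + 1)}) \<le> n * i"
proof (induction n)
  case 0 then show ?case by simp
next
  case (Suc n)
  have "{a ..< a + int (Suc n) * (2 * int i + 1)} = {a ..< a + int n * (2 * int i + 1)} \<union> {a + int n * (2 * int i + 1) .. a + int n * (2 * int i + 1) + 2 * int i}"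
  proof -
    define c where "c = int n * (2 * int i + 1)"
    have c0: "0 \<le> c" unfolding c_def by simp
    have e: "int (Suc n) * (2 * int i + 1) = c + 2 * int i + 1" unfolding c_def by (simp add: algebra_simps)
    show ?thesis unfolding e c_def[symmetric] using c0 by auto
  qed
  hence "card (A \<inter> {a ..< a + int (Suc n) * (2 * int i + 1)}) \<le> card (A \<inter> {a ..< a + int n * (2 * int i + 1)}) + card (A \<inter> {a + int n * (2 * int i + 1) .. a + int n * (2 * int i + 1) + 2 * int i})"
    by (simp add: Int_Un_distrib card_Un_le)
  also have "\<dots> \<le> n * i + i" using Suc window[OF assms] by (meson add_mono)
  finally show ?case by simp
qed

lemma ratio_upper:
  assumes "indep_set S A" "1 \<in> S" "2*i \<in> S" "i \<ge> 1"
  shows "real (card (A \<inter> {- int N .. int N})) / real (2 * N + 1) \<le> real i / real (2*i+1) + real i / real (2*N+1)"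
proof -
  define w where "w = 2*i+1"
  define m where "m = (2*N+1) div w + 1"
  have wpos: "w > 0" unfolding w_def by simp
  have mw: "m * w \<ge> 2*N+1"
  proof -
    have "(2*N+1) div w * w + (2*N+1) mod w = 2*N+1" by simp
    moreover have "(2*N+1) mod w < w" using wpos by simp
    moreover have "m * w = (2*N+1) div w * w + w" unfolding m_def by simp
    ultimately show ?thesis by linarith
  qed
  have "{- int N .. int N} \<subseteq> {- int N ..< - int N + int m * (2 * int i + 1)}"
  proof -
    have "int m * (2 * int i + 1) = int (m * w)" unfolding w_def by (simp add: algebra_simps)
    moreover have "int (m * w) \<ge> 2 * int N + 1" using mw by linarith
    ultimately show ?thesis by auto
  qed
  hence "card (A \<inter> {- int N .. int N}) \<le> card (A \<inter> {- int N ..< - int N + int m * (2 * int i + 1)})"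
    by (intro card_mono) auto
  also have "\<dots> \<le> m * i" by (rule count_upper[OF assms])
  finally have c0: "card (A \<inter> {- int N .. int N}) \<le> m * i" .
  have c: "real (card (A \<inter> {- int N .. int N})) \<le> real m * real i"
    using c0 by (simp only: of_nat_mult[symmetric] of_nat_le_iff)
  have "real m \<le> real (2*N+1) / real w + 1"
  proof -
    have "real ((2*N+1) div w) \<le> real (2*N+1) / real w" by (rule of_nat_div_le_of_nat)
    thus ?thesis unfolding m_def by simp
  qed
  hence "real m * real i \<le> (real (2*N+1) / real w + 1) * real i" by (simp add: mult_right_mono)
  with c have "real (card (A \<inter> {- int N .. int N})) \<le> (real (2*N+1) / real w + 1) * real i" by linarith
  hence "real (card (A \<inter> {- int N .. int N})) / real (2 * N + 1) \<le> (real (2*N+1) / real w + 1) * real i / real (2*N+1)"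
    by (simp add: divide_right_mono)
  also have "\<dots> = real i / real w + real i / real (2*N+1)"
    using wpos by (simp add: field_simps)
  finally show ?thesis unfolding w_def .
qed

lemma density_upper:
  assumes "indep_set S A" "1 \<in> S" "2*i \<in> S" "i \<ge> 1"
  shows "density A \<le> ereal (real i / real (2*i+1))"
proof -
  have "density A \<le> limsup (\<lambda>N::nat. ereal (real i / real (2*i+1) + real i / real (2*N+1)))"
    unfolding density_def by (intro Limsup_mono always_eventually allI ereal_less_eq(3)[THEN iffD2] ratio_upper[OF assms])
  also have "\<dots> = ereal (real i / real (2*i+1))"
  proof (rule lim_imp_Limsup)
    show "\<not> trivial_limit (sequentially :: nat filter)" by simp
    have "(\<lambda>N::nat. real i / real (2*i+1) + real i / real (2*N+1)) \<longlonglongrightarrow> real i / real (2*i+1) + 0"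
      by (intro tendsto_add tendsto_const) real_asymp
    thus "(\<lambda>N::nat. ereal (real i / real (2*i+1) + real i / real (2*N+1))) \<longlonglongrightarrow> ereal (real i / real (2*i+1))"
      by (simp add: tendsto_ereal)
  qed
  finally show ?thesis .
qed



definition constr :: "nat \<Rightarrow> int \<Rightarrow> nat \<Rightarrow> int set" where
  "constr i P q = {x. x mod P < (2 * int i + 1) * int q \<and> odd ((x mod P) mod (2 * int i + 1))}"

lemma core:
  assumes i: "i \<ge> 1" and P: "P > 0" and Lq: "(2 * int i + 1) * int q + 2 * int i \<le> P"
    and x: "x \<in> constr i P q" and d: "d = 1 \<or> d = 2 * int i \<or> d = P + 1"
  shows "x + d \<notin> constr i P q"
proof
  assume y: "x + d \<in> constr i P q"
  define w where "w = 2 * int i + 1"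
  define a where "a = x mod P"
  define r where "r = a mod w"
  have wpos: "w > 0" unfolding w_def by simp
  have a0: "0 \<le> a" "a < w * int q" "odd r" using x P unfolding constr_def a_def r_def w_def by auto
  have r0: "0 \<le> r" "r < w" unfolding r_def using wpos by auto
  have r1: "1 \<le> r" "r \<le> 2 * int i - 1"
  proof -
    show "1 \<le> r" using r0 a0(3) by (cases "r = 0") auto
    have "r \<noteq> 2 * int i" using a0(3) by auto
    thus "r \<le> 2 * int i - 1" using r0 unfolding w_def by auto
  qed
  consider "d = 1 \<or> d = P + 1" | "d = 2 * int i" using d by blast
  then show False
  proof cases
    case 1
    have "(x + d) mod P = (x + 1) mod P" using 1
    proof
      assume "d = P + 1"
      then have "x + d = (x + 1) + P" by simp
      then show ?thesis by (simp only: mod_add_self2)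
    qed simp
    also have "\<dots> = (a + 1) mod P" unfolding a_def by (simp add: mod_add_left_eq)
    also have "\<dots> = a + 1" using a0 Lq r0 i unfolding w_def by (intro mod_pos_pos_trivial) auto
    finally have e: "(x + d) mod P = a + 1" .
    have "(a + 1) mod w = (r + 1) mod w" unfolding r_def by (simp add: mod_add_left_eq)
    also have "\<dots> = r + 1" using r0 r1 unfolding w_def by (intro mod_pos_pos_trivial) auto
    finally have "(a + 1) mod w = r + 1" .
    with y e a0(3) show False unfolding constr_def w_def by auto
  next
    case 2
    have "(x + d) mod P = (a + 2 * int i) mod P" unfolding a_def 2 by (simp add: mod_add_left_eq)
    also have "\<dots> = a + 2 * int i" using a0 Lq r0 i unfolding w_def by (intro mod_pos_pos_trivial) auto
    finally have e: "(x + d) mod P = a + 2 * int i" .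
    have "(a + 2 * int i) mod w = (r + 2 * int i) mod w" unfolding r_def by (simp add: mod_add_left_eq)
    also have "\<dots> = ((r - 1) + w) mod w" unfolding w_def by (simp add: algebra_simps)
    also have "\<dots> = r - 1" using r0 r1 by simp
    finally have "(a + 2 * int i) mod w = r - 1" .
    with y e a0(3) show False unfolding constr_def w_def by auto
  qed
qed

lemma constr_indep:
  assumes i: "i \<ge> 1" and P: "P > 0" and Lq: "(2 * int i + 1) * int q + 2 * int i \<le> P"
  shows "indep_set {1, 2 * i, nat (P + 1)} (constr i P q)"
  unfolding indep_set_def dist_adj_def
proof (intro ballI notI)
  fix x y assume x: "x \<in> constr i P q" and y: "y \<in> constr i P q"
    and adj: "nat \<bar>x - y\<bar> \<in> {1, 2 * i, nat (P + 1)} \<and> x \<noteq> y"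
  have "\<bar>x - y\<bar> = 1 \<or> \<bar>x - y\<bar> = 2 * int i \<or> \<bar>x - y\<bar> = P + 1" using adj P by auto
  moreover have "y = x + \<bar>x - y\<bar> \<or> x = y + \<bar>x - y\<bar>" by (cases "x \<le> y") auto
  ultimately obtain d where d: "d = 1 \<or> d = 2 * int i \<or> d = P + 1" and "y = x + d \<or> x = y + d"
    by blast
  then show False using core[OF i P Lq] x y by blast
qed


lemma dm:
  fixes u r w :: int
  assumes "0 \<le> r" "r < w"
  shows "(u*w + r) div w = u" "(u*w + r) mod w = r"
  using assms by (simp_all add: add.commute[of "u*w"])

lemma card_A0:
  "card {j::int. 0 \<le> j \<and> j < (2*int i+1) * int q \<and> odd (j mod (2*int i+1))} = i * q"
proof -
  define w where "w = 2 * int i + 1"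
  have wpos: "w > 0" unfolding w_def by simp
  define f where "f = (\<lambda>(u::nat, l::nat). int u * w + (2 * int l + 1))"
  have inj: "inj_on f ({..<q} \<times> {..<i})"
  proof (rule inj_onI)
    fix a b assume a: "a \<in> {..<q} \<times> {..<i}" and b: "b \<in> {..<q} \<times> {..<i}" and eab: "f a = f b"
    obtain u l where ea: "a = (u, l)" by (cases a)
    obtain u' l' where eb: "b = (u', l')" by (cases b)
    have u: "u \<in> {..<q}" "l \<in> {..<i}" "u' \<in> {..<q}" "l' \<in> {..<i}" using a b ea eb by auto
    have e: "f (u, l) = f (u', l')" using eab ea eb by simp
    have r: "0 \<le> 2 * int l + 1" "2 * int l + 1 < w" "0 \<le> 2 * int l' + 1" "2 * int l' + 1 < w"
      using u unfolding w_def by auto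
    have e': "int u * w + (2*int l+1) = int u' * w + (2*int l'+1)" using e unfolding f_def by simp
    have "int u = (int u * w + (2*int l+1)) div w" using dm(1)[OF r(1,2), of "int u"] by simp
    also have "\<dots> = (int u' * w + (2*int l'+1)) div w" by (rule arg_cong[OF e'])
    also have "\<dots> = int u'" using dm(1)[OF r(3,4), of "int u'"] by simp
    finally have "int u = int u'" .
    moreover have "2 * int l + 1 = 2 * int l' + 1"
      using dm(2)[OF r(1,2), of "int u"] dm(2)[OF r(3,4), of "int u'"] arg_cong[OF e', of "\<lambda>t. t mod w"] by simp
    ultimately show "a = b" using ea eb by simp
  qed
  have img: "f ` ({..<q} \<times> {..<i}) = {j::int. 0 \<le> j \<and> j < w * int q \<and> odd (j mod w)}"
  proof (intro equalityI subsetI)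
    fix j assume "j \<in> f ` ({..<q} \<times> {..<i})"
    then obtain u l where u: "u < q" "l < i" and j: "j = int u * w + (2 * int l + 1)" unfolding f_def by auto
    have r: "0 \<le> 2 * int l + 1" "2 * int l + 1 < w" using u unfolding w_def by auto
    have "(int u + 1) * w \<le> int q * w" using u wpos by (intro mult_right_mono) auto
    hence "j < w * int q" using j r by (simp add: algebra_simps)
    moreover have "j mod w = 2 * int l + 1" using dm(2)[OF r] j by simp
    ultimately show "j \<in> {j::int. 0 \<le> j \<and> j < w * int q \<and> odd (j mod w)}" using j r wpos by simp
  next
    fix j assume "j \<in> {j::int. 0 \<le> j \<and> j < w * int q \<and> odd (j mod w)}"
    hence j: "0 \<le> j" "j < w * int q" "odd (j mod w)" by auto
    define u where "u = j div w"
    define r where "r = j mod w"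
    have ej: "j = u * w + r" unfolding u_def r_def by simp
    have u0: "u \<ge> 0" unfolding u_def using j wpos by (simp add: pos_imp_zdiv_nonneg_iff)
    have r0: "0 \<le> r" "r < w" unfolding r_def using wpos by auto
    have "u * w \<le> j" using ej r0 by linarith
    hence "u * w < w * int q" using j(2) by linarith
    hence "u * w < int q * w" by (simp add: mult.commute)
    hence uq: "u < int q" using wpos by (simp add: mult_less_cancel_right)
    have "r \<noteq> 2 * int i" using j(3) unfolding r_def by auto
    hence r2: "r \<le> 2 * int i - 1" using r0 unfolding w_def by auto
    define l where "l = r div 2"
    have r1: "r \<ge> 1" using j(3) r0 unfolding r_def by (cases "j mod w = 0") auto
    have rr: "r = 2 * (r div 2) + r mod 2" by simp
    have "r mod 2 = 1" using j(3) unfolding r_def by (simp add: odd_iff_mod_2_eq_one)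
    hence el: "r = 2 * l + 1" unfolding l_def using rr by linarith
    have l0: "l \<ge> 0" "l < int i" using el r1 r2 by auto
    have "f (nat u, nat l) = j" unfolding f_def using ej el u0 l0 by simp
    moreover have "(nat u, nat l) \<in> {..<q} \<times> {..<i}" using uq u0 l0 by auto
    ultimately show "j \<in> f ` ({..<q} \<times> {..<i})" by force
  qed
  have "card {j::int. 0 \<le> j \<and> j < w * int q \<and> odd (j mod w)} = card ({..<q} \<times> {..<i})"
    unfolding img[symmetric] by (rule card_image[OF inj])
  thus ?thesis unfolding w_def by simp
qed


lemma block_card:
  assumes P: "P > 0" and Lq: "(2 * int i + 1) * int q < P"
  shows "card (constr i P q \<inter> {t*P ..< t*P + P}) = i * q"
proof -
  define A0 where "A0 = {j::int. 0 \<le> j \<and> j < (2*int i+1) * int q \<and> odd (j mod (2*int i+1))}"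
  have modb: "x mod P = x - t*P" if "x \<in> {t*P ..< t*P + P}" for x
  proof -
    have "x mod P = ((x - t*P) + t*P) mod P" by simp
    also have "\<dots> = (x - t*P) mod P" by (rule mod_mult_self1)
    also have "\<dots> = x - t*P" using that by (intro mod_pos_pos_trivial) auto
    finally show ?thesis .
  qed
  have "constr i P q \<inter> {t*P ..< t*P + P} = (\<lambda>j. t*P + j) ` A0"
  proof (intro equalityI subsetI)
    fix x assume x: "x \<in> constr i P q \<inter> {t*P ..< t*P + P}"
    hence "x - t*P \<in> A0" using modb[of x] unfolding constr_def A0_def by auto
    moreover have "x = t*P + (x - t*P)" by simp
    ultimately show "x \<in> (\<lambda>j. t*P + j) ` A0" by blast
  next
    fix x assume "x \<in> (\<lambda>j. t*P + j) ` A0"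
    then obtain j where j: "j \<in> A0" "x = t*P + j" by blast
    have jb: "0 \<le> j" "j < P" using j(1) Lq unfolding A0_def by auto
    hence xb: "x \<in> {t*P ..< t*P + P}" using j by auto
    have "x mod P = j" using modb[OF xb] j by simp
    thus "x \<in> constr i P q \<inter> {t*P ..< t*P + P}" using xb j(1) unfolding constr_def A0_def by auto
  qed
  hence "card (constr i P q \<inter> {t*P ..< t*P + P}) = card A0"
    by (simp add: card_image)
  also have "\<dots> = i * q" unfolding A0_def by (rule card_A0)
  finally show ?thesis .
qed

lemma count_card:
  assumes P: "P > 0" and Lq: "(2 * int i + 1) * int q < P"
  shows "card (constr i P q \<inter> {a*P ..< (a + int n)*P}) = n * (i * q)"
proof (induction n)
  case 0 then show ?case by simp
next
  case (Suc n)
  define b where "b = (a + int n) * P"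
  have b1: "(a + int (Suc n)) * P = b + P" unfolding b_def by (simp add: algebra_simps)
  have b2: "a * P \<le> b" unfolding b_def using P by (simp add: algebra_simps)
  have "{a*P ..< (a + int (Suc n))*P} = {a*P ..< b} \<union> {b ..< b + P}" unfolding b1 using b2 P by auto
  hence "card (constr i P q \<inter> {a*P ..< (a + int (Suc n))*P})
      = card (constr i P q \<inter> {a*P ..< b}) + card (constr i P q \<inter> {b ..< b + P})"
    by (simp add: Int_Un_distrib card_Un_disjoint disjoint_iff)
  also have "card (constr i P q \<inter> {b ..< b + P}) = i * q"
    unfolding b_def using block_card[OF P Lq, of "a + int n"] by simp
  also have "card (constr i P q \<inter> {a*P ..< b}) = n * (i * q)" using Suc unfolding b_def by simp
  finally show ?case by simp
qed

lemma aux_id: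
  fixes c p n d :: real
  assumes "p > 0" "n \<ge> 0" "d = 2*n+1"
  shows "c/p - c*(2*p-1)/(p*d) = 2*((n-p+1)/p)*c/d"
proof -
  have d0: "d > 0" using assms by simp
  have e1: "c/p = c*d/(p*d)" using d0 by simp
  have e2: "2*((n-p+1)/p)*c/d = (2*(n-p+1)*c)/(p*d)" by simp
  have "c/p - c*(2*p-1)/(p*d) = (c*d - c*(2*p-1))/(p*d)" unfolding e1 by (rule diff_divide_distrib[symmetric])
  also have "c*d - c*(2*p-1) = 2*(n-p+1)*c" unfolding assms(3) by (simp add: algebra_simps)
  finally show ?thesis unfolding e2 .
qed

lemma ratio_lower:
  assumes P: "P > 0" and Lq: "(2 * int i + 1) * int q < P"
  shows "real (card (constr i P q \<inter> {- int N .. int N})) / real (2 * N + 1)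
     \<ge> real (i*q) / real_of_int P - real (i*q) * (2 * real_of_int P - 1) / (real_of_int P * real (2*N+1))"
proof -
  define c where "c = i * q"
  define m where "m = int N div P"
  have m0: "m \<ge> 0" unfolding m_def using P by (simp add: pos_imp_zdiv_nonneg_iff)
  have Nd: "int N = m * P + int N mod P" unfolding m_def by simp
  have Nm: "0 \<le> int N mod P" "int N mod P < P" using P by auto
  have mP1: "m * P \<le> int N" using Nd Nm by linarith
  have mP2: "m * P \<ge> int N - P + 1" using Nd Nm by linarith
  have sub: "{(-m)*P ..< (-m + int (nat (2*m)))*P} \<subseteq> {- int N .. int N}"
  proof -
    have "(-m + int (nat (2*m)))*P = m * P" using m0 by (simp add: algebra_simps)
    moreover have "(-m)*P = - (m * P)" by simp
    ultimately show ?thesis using mP1 by auto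
  qed
  have "card (constr i P q \<inter> {(-m)*P ..< (-m + int (nat (2*m)))*P}) \<le> card (constr i P q \<inter> {- int N .. int N})"
    using sub by (intro card_mono) auto
  hence cge: "nat (2*m) * c \<le> card (constr i P q \<inter> {- int N .. int N})"
    using count_card[OF P Lq, of "-m" "nat (2*m)"] unfolding c_def by simp
  have "real (nat (2*m) * c) = 2 * real_of_int m * real c" using m0 by simp
  moreover have "real (nat (2*m) * c) \<le> real (card (constr i P q \<inter> {- int N .. int N}))"
    using cge by (rule of_nat_mono)
  ultimately have c1: "2 * real_of_int m * real c \<le> real (card (constr i P q \<inter> {- int N .. int N}))"
    by linarith
  have Pr: "real_of_int P > 0" using P by simp
  have "real_of_int (int N - P + 1) \<le> real_of_int (m * P)" using mP2 by (simp only: of_int_le_iff)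
  hence "real_of_int m * real_of_int P \<ge> real N - real_of_int P + 1" by simp
  hence hm: "real_of_int m \<ge> (real N - real_of_int P + 1) / real_of_int P"
    using Pr by (simp add: divide_le_eq)
  have "2 * real_of_int m * real c \<ge> 2 * ((real N - real_of_int P + 1) / real_of_int P) * real c"
    by (rule mult_right_mono) (use hm in linarith, simp)
  with c1 have c2: "real (card (constr i P q \<inter> {- int N .. int N})) \<ge> 2 * ((real N - real_of_int P + 1) / real_of_int P) * real c"
    by linarith
  have "real c / real_of_int P - real c * (2 * real_of_int P - 1) / (real_of_int P * real (2*N+1))
      = 2 * ((real N - real_of_int P + 1) / real_of_int P) * real c / real (2*N+1)"
    by (rule aux_id[OF Pr]) simp_all
  also have "\<dots> \<le> real (card (constr i P q \<inter> {- int N .. int N})) / real (2 * N + 1)"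
    using c2 by (intro divide_right_mono) auto
  finally show ?thesis unfolding c_def .
qed

lemma density_lower:
  assumes P: "P > 0" and Lq: "(2 * int i + 1) * int q < P"
  shows "density (constr i P q) \<ge> ereal (real (i*q) / real_of_int P)"
proof -
  define K where "K = real (i*q) * (2 * real_of_int P - 1) / real_of_int P"
  have lim: "(\<lambda>N::nat. ereal (real (i*q) / real_of_int P - K / real (2*N+1))) \<longlonglongrightarrow> ereal (real (i*q) / real_of_int P)"
  proof -
    have "(\<lambda>N::nat. real (i*q) / real_of_int P - K / real (2*N+1)) \<longlonglongrightarrow> real (i*q) / real_of_int P - 0"
      by (intro tendsto_diff tendsto_const) real_asymp
    hence "(\<lambda>N::nat. real (i*q) / real_of_int P - K / real (2*N+1)) \<longlonglongrightarrow> real (i*q) / real_of_int P" by simp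
    thus ?thesis by (rule tendsto_ereal)
  qed
  have "ereal (real (i*q) / real_of_int P) = liminf (\<lambda>N::nat. ereal (real (i*q) / real_of_int P - K / real (2*N+1)))"
    by (rule sym, rule lim_imp_Liminf[OF _ lim]) simp
  also have "\<dots> \<le> liminf (\<lambda>N::nat. ereal (real (card (constr i P q \<inter> {- int N .. int N})) / real (2 * N + 1)))"
  proof (intro Liminf_mono always_eventually allI)
    fix N :: nat
    have "real (i*q) / real_of_int P - K / real (2*N+1) = real (i*q) / real_of_int P - real (i*q) * (2 * real_of_int P - 1) / (real_of_int P * real (2*N+1))"
      unfolding K_def by simp
    also have "\<dots> \<le> real (card (constr i P q \<inter> {- int N .. int N})) / real (2 * N + 1)"
      by (rule ratio_lower[OF P Lq])
    finally show "ereal (real (i*q) / real_of_int P - K / real (2*N+1)) \<le> ereal (real (card (constr i P q \<inter> {- int N .. int N})) / real (2 * N + 1))"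
      by simp
  qed
  also have "\<dots> \<le> density (constr i P q)" unfolding density_def by (rule Liminf_le_Limsup) simp
  finally show ?thesis .
qed


lemma ratio_upper_bound:
  assumes "i \<ge> 1"
  shows "indep_ratio {1, 2 * i, k} \<le> ereal (real i / real (2 * i + 1))"
  unfolding indep_ratio_def
proof (rule SUP_least)
  fix A assume "A \<in> {A. indep_set {1, 2 * i, k} A}"
  hence "indep_set {1, 2 * i, k} A" by simp
  thus "density A \<le> ereal (real i / real (2 * i + 1))"
    by (rule density_upper[OF _ _ _ assms]) simp_all
qed

lemma aux2:
  fixes a W p :: real
  assumes "W > 0" "p > 0"
  shows "a*(p-4*a)/W/p = a/W - 4*a^2/(W*p)"
  using assms by (simp add: field_simps power2_eq_square)

lemma ratio_lower_bound:
  assumes i: "i \<ge> 1" and k: "k \<ge> 4 * i + 3"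
  shows "ereal (real i / real (2 * i + 1) - 4 * real i ^ 2 / (real k - 1)) \<le> indep_ratio {1, 2 * i, k}"
proof -
  define w where "w = 2 * int i + 1"
  define P where "P = int k - 1"
  define x where "x = P - 2 * int i"
  define q where "q = nat (x div w)"
  have wpos: "w > 0" unfolding w_def by simp
  have x0: "x \<ge> 0" unfolding x_def P_def using k by simp
  have P0: "P > 0" unfolding P_def using k by simp
  have qd: "int q = x div w" unfolding q_def using x0 wpos by (simp add: pos_imp_zdiv_nonneg_iff)
  have xd: "x = x div w * w + x mod w" by simp
  have xm: "0 \<le> x mod w" "x mod w < w" using wpos by auto
  have wq: "w * int q = x div w * w" using qd by (simp add: mult.commute)
  have qw1: "w * int q \<le> x" using xd xm wq by linarith
  have qw2: "w * int q \<ge> x - 2 * int i" using xd xm wq unfolding w_def by linarith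
  have Lq: "(2 * int i + 1) * int q + 2 * int i \<le> P" using qw1 unfolding w_def x_def by simp
  have Lq': "(2 * int i + 1) * int q < P" using Lq i by simp
  have kk: "nat (P + 1) = k" unfolding P_def using k by simp
  have ind: "indep_set {1, 2 * i, k} (constr i P q)" using constr_indep[OF i P0 Lq] unfolding kk .
  have "ereal (real (i*q) / real_of_int P) \<le> density (constr i P q)" by (rule density_lower[OF P0 Lq'])
  also have "\<dots> \<le> indep_ratio {1, 2 * i, k}" unfolding indep_ratio_def
    by (rule SUP_upper) (rule CollectI, rule ind)
  finally have up: "ereal (real (i*q) / real_of_int P) \<le> indep_ratio {1, 2 * i, k}" .
  have Pr: "real_of_int P = real k - 1" unfolding P_def using k by simp
  have Ppos: "real_of_int P > 0" using P0 by simp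
  have wr: "real_of_int w = real (2*i+1)" unfolding w_def by simp
  have wrpos: "real (2*i+1) > 0" by simp
  have qwr: "real (2*i+1) * real q \<ge> real_of_int P - 4 * real i"
  proof -
    have "real_of_int (w * int q) \<ge> real_of_int (P - 4 * int i)" using qw2 unfolding x_def by (simp only: of_int_le_iff)
    thus ?thesis using wr by simp
  qed
  have "real i * (real (2*i+1) * real q) \<ge> real i * (real_of_int P - 4 * real i)"
    using qwr by (rule mult_left_mono) simp
  hence h1: "real i * real q \<ge> real i * (real_of_int P - 4 * real i) / real (2*i+1)"
    using wrpos by (simp add: divide_le_eq algebra_simps)
  have "real i * (real_of_int P - 4 * real i) / real (2*i+1) / real_of_int P \<le> real i * real q / real_of_int P"
    using h1 Ppos by (intro divide_right_mono) auto
  moreover have "real i * (real_of_int P - 4 * real i) / real (2*i+1) / real_of_int P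
      = real i / real (2*i+1) - 4 * real i ^ 2 / (real (2*i+1) * real_of_int P)"
    by (rule aux2[OF wrpos Ppos])
  moreover have "4 * real i ^ 2 / (real (2*i+1) * real_of_int P) \<le> 4 * real i ^ 2 / real_of_int P"
  proof -
    have "real_of_int P \<le> real (2*i+1) * real_of_int P" using Ppos by simp
    thus ?thesis using Ppos by (intro divide_left_mono) auto
  qed
  ultimately have "real i / real (2 * i + 1) - 4 * real i ^ 2 / (real k - 1) \<le> real (i*q) / real_of_int P"
    unfolding Pr[symmetric] by simp
  hence "ereal (real i / real (2 * i + 1) - 4 * real i ^ 2 / (real k - 1)) \<le> ereal (real (i*q) / real_of_int P)"
    by simp
  from this up show ?thesis by (rule order_trans)
qed

theorem theorem24:
  fixes i :: nat
  assumes "i \<ge> 1"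
  shows "(\<lambda>k::nat. indep_ratio {1, 2 * i, k}) \<longlonglongrightarrow> ereal (real i / real (2 * i + 1))"
proof (rule tendsto_sandwich)
  show "eventually (\<lambda>k. ereal (real i / real (2 * i + 1) - 4 * real i ^ 2 / (real k - 1)) \<le> indep_ratio {1, 2 * i, k}) sequentially"
    using ratio_lower_bound[OF assms] by (intro eventually_sequentiallyI[of "4 * i + 3"]) auto
  show "eventually (\<lambda>k. indep_ratio {1, 2 * i, k} \<le> ereal (real i / real (2 * i + 1))) sequentially"
    using ratio_upper_bound[OF assms] by simp
  show "(\<lambda>k::nat. ereal (real i / real (2 * i + 1))) \<longlonglongrightarrow> ereal (real i / real (2 * i + 1))" by simp
  have "(\<lambda>k::nat. real i / real (2 * i + 1) - 4 * real i ^ 2 / (real k - 1)) \<longlonglongrightarrow> real i / real (2 * i + 1) - 0"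
    by (intro tendsto_diff tendsto_const) real_asymp
  hence "(\<lambda>k::nat. real i / real (2 * i + 1) - 4 * real i ^ 2 / (real k - 1)) \<longlonglongrightarrow> real i / real (2 * i + 1)" by simp
  thus "(\<lambda>k::nat. ereal (real i / real (2 * i + 1) - 4 * real i ^ 2 / (real k - 1))) \<longlonglongrightarrow> ereal (real i / real (2 * i + 1))"
    by (rule tendsto_ereal)
qed

end
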